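(* Let $0 < \epsilon < 1/20$. Then for all sufficiently large $n$ (depending on $\epsilon$), writing $G = (\mathbb{Z}/2\mathbb{Z})^n$ and $N = 2^n$, there is a function $f : G \to [0,1]$ such that every subgroup $H \leq G$ which is $\epsilon$-regular for $f$ satisfies $|G/H| \geq W\!\left(\tfrac12\log_2(1/\epsilon) - 5\right)$.
   Context: For a subgroup $H \leq G$ and $g \in G$ define $f_H^{+g} : H \to [0,1]$ by $f_H^{+g}(x) = f(x+g)$. An element $g \in G$ is an $\epsilon$-regular value for $f$ (with respect to $H$) if $\left|\sum_{x \in H} f_H^{+g}(x)\chi(x)\right| \leq \epsilon|H|$ for every nontrivial character $\chi$ of $H$. $H$ is $\epsilon$-regular for $f$ if the number of $g \in G$ which are not $\epsilon$-regular values is at most $\epsilon N$. $W(t)$ is a tower of twos of height $\lceil t\rceil$: $W(t) = w_{\max(\lceil t\rceil,0)}$ where $w_0 = 1$, $w_{h+1} = 2^{w_h}$. *)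

theory Defs
  imports Complex_Main
begin

text \<open>The group G = (Z/2Z)^n is modelled as the subsets of {0..<n}
  (an element is the support of its 0/1 coordinate vector); the group
  operation is symmetric difference, with neutral element the empty set.\<close>

definition cube :: "nat \<Rightarrow> nat set set" where
  "cube n = Pow {0..<n}"

definition gadd :: "nat set \<Rightarrow> nat set \<Rightarrow> nat set" where
  "gadd x y = (x - y) \<union> (y - x)"

definition is_subgroup :: "nat \<Rightarrow> nat set set \<Rightarrow> bool" where
  "is_subgroup n H \<longleftrightarrow> H \<subseteq> cube n \<and> {} \<in> H \<and>
     (\<forall>x\<in>H. \<forall>y\<in>H. gadd x y \<in> H)"

definition is_character :: "nat set set \<Rightarrow> (nat set \<Rightarrow> complex) \<Rightarrow> bool" where
  "is_character H \<chi> \<longleftrightarrow> (\<forall>x\<in>H. \<chi> x \<noteq> 0) \<and>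
     (\<forall>x\<in>H. \<forall>y\<in>H. \<chi> (gadd x y) = \<chi> x * \<chi> y)"

definition nontrivial_character :: "nat set set \<Rightarrow> (nat set \<Rightarrow> complex) \<Rightarrow> bool" where
  "nontrivial_character H \<chi> \<longleftrightarrow> is_character H \<chi> \<and> (\<exists>x\<in>H. \<chi> x \<noteq> 1)"

definition regular_value ::
  "nat set set \<Rightarrow> (nat set \<Rightarrow> real) \<Rightarrow> real \<Rightarrow> nat set \<Rightarrow> bool" where
  "regular_value H f \<epsilon> g \<longleftrightarrow>
     (\<forall>\<chi>. nontrivial_character H \<chi> \<longrightarrow>
        cmod (\<Sum>x\<in>H. complex_of_real (f (gadd x g)) * \<chi> x) \<le> \<epsilon> * real (card H))"

definition regular_subgroup ::
  "nat \<Rightarrow> nat set set \<Rightarrow> (nat set \<Rightarrow> real) \<Rightarrow> real \<Rightarrow> bool" where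
  "regular_subgroup n H f \<epsilon> \<longleftrightarrow>
     real (card {g \<in> cube n. \<not> regular_value H f \<epsilon> g}) \<le> \<epsilon> * 2 ^ n"

fun tower :: "nat \<Rightarrow> nat" where
  "tower 0 = 1"
| "tower (Suc h) = 2 ^ tower h"

definition W :: "real \<Rightarrow> nat" where
  "W t = tower (nat \<lceil>t\<rceil>)"

end

theory Submission
  imports Defs
begin


lemma card_gadd:
  assumes "finite A" "finite B"
  shows "card (gadd A B) + 2 * card (A \<inter> B) = card A + card B"
proof -
  have d: "gadd A B = (A - B) \<union> (B - A)" by (simp add: gadd_def)
  have c1: "card (gadd A B) = card (A - B) + card (B - A)"
    unfolding d using assms by (intro card_Un_disjoint) auto
  have e1: "A = (A - B) \<union> (A \<inter> B)" by blast
  have "card A = card (A - B) + card (A \<inter> B)"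
    using assms by (subst e1, intro card_Un_disjoint) auto
  moreover have e2: "B = (B - A) \<union> (A \<inter> B)" by blast
  have "card B = card (B - A) + card (A \<inter> B)"
    using assms by (subst e2, intro card_Un_disjoint) auto
  ultimately show ?thesis using c1 by simp
qed

lemma odd_gadd:
  assumes "finite A" "finite B"
  shows "odd (card (gadd A B)) \<longleftrightarrow> (odd (card A) \<noteq> odd (card B))"
proof -
  have "card (gadd A B) + 2 * card (A \<inter> B) = card A + card B" using card_gadd[OF assms] .
  thus ?thesis by presburger
qed

lemma gadd_inter: "gadd x y \<inter> T = gadd (x \<inter> T) (y \<inter> T)"
  by (auto simp: gadd_def)

lemma gadd_gadd: "gadd (gadd x h) h = x"
  by (auto simp: gadd_def)

definition symd :: "'a set \<Rightarrow> 'a set \<Rightarrow> 'a set" where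
  "symd X Y = (X - Y) \<union> (Y - X)"

lemma greedy_code:
  fixes A :: "nat set set"
  assumes "finite A" "1 \<le> k" "2^m * card {z. z \<subseteq> A \<and> card z < k} \<le> 2^card A"
  shows "\<exists>c. (\<forall>a. c a \<subseteq> {0..<m}) \<and>
     (\<forall>v. v \<subseteq> {0..<m} \<and> v \<noteq> {} \<longrightarrow> k \<le> card {a\<in>A. odd (card (v \<inter> c a))})"
  using assms(3)
proof (induction m)
  case 0
  show ?case by (rule exI[of _ "\<lambda>a. {}"]) auto
next
  case (Suc m)
  define B where "B = {z. z \<subseteq> A \<and> card z < k}"
  have finB: "finite B" unfolding B_def using assms(1) by auto
  have "{} \<in> B" unfolding B_def using assms(2) by auto
  hence B1: "1 \<le> card B" using finB by (metis One_nat_def Suc_leI card_gt_0_iff empty_iff)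
  have "2^m * card B \<le> 2^Suc m * card B" by simp
  hence hm: "2^m * card B \<le> 2^card A" using Suc.prems[folded B_def] by linarith
  obtain c where c1: "\<forall>a. c a \<subseteq> {0..<m}"
    and c2: "\<forall>v. v \<subseteq> {0..<m} \<and> v \<noteq> {} \<longrightarrow> k \<le> card {a\<in>A. odd (card (v \<inter> c a))}"
    using Suc.IH[OF hm[unfolded B_def]] by blast
  define w where "w v = {a\<in>A. odd (card (v \<inter> c a))}" for v
  define Bad where "Bad = (\<Union>v\<in>Pow {0..<m}. (\<lambda>z. symd (w v) z) ` B)"
  have finBad: "finite Bad" unfolding Bad_def using finB by auto
  have "card Bad \<le> (\<Sum>v\<in>Pow {0..<m}. card ((\<lambda>z. symd (w v) z) ` B))"
    unfolding Bad_def by (rule card_UN_le) auto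
  also have "\<dots> \<le> (\<Sum>v\<in>Pow {0..<m}. card B)"
    by (intro sum_mono card_image_le finB)
  also have "\<dots> = 2^m * card B" by (simp add: card_Pow)
  also have "\<dots> < 2^Suc m * card B" using B1 by simp
  also have "\<dots> \<le> 2 ^ card A" using Suc.prems[folded B_def] by simp
  also have "\<dots> = card (Pow A)" using assms(1) by (simp add: card_Pow)
  finally have "card Bad < card (Pow A)" .
  hence "\<not> Pow A \<subseteq> Bad" using finBad by (meson card_mono not_le)
  then obtain u where uA: "u \<subseteq> A" and uB: "u \<notin> Bad" by auto
  have ugood: "k \<le> card (symd (w v) u)" if "v \<subseteq> {0..<m}" for v
  proof (rule ccontr)
    assume "\<not> k \<le> card (symd (w v) u)"
    hence "symd (w v) u \<in> B" unfolding B_def w_def symd_def using uA by auto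
    moreover have "u = symd (w v) (symd (w v) u)" by (auto simp: symd_def)
    ultimately have "u \<in> Bad" unfolding Bad_def using that by blast
    thus False using uB by simp
  qed
  define c' where "c' a = c a \<union> (if a \<in> u then {m} else {})" for a
  show ?case
  proof (rule exI[of _ c'], intro conjI allI impI)
    fix a have "c a \<subseteq> {0..<m}" using c1 by blast
    thus "c' a \<subseteq> {0..<Suc m}" by (auto simp: c'_def)
  next
    fix v assume v: "v \<subseteq> {0..<Suc m} \<and> v \<noteq> {}"
    show "k \<le> card {a\<in>A. odd (card (v \<inter> c' a))}"
    proof (cases "m \<in> v")
      case False
      hence "v \<subseteq> {0..<m}" using v by (auto simp: subset_iff less_Suc_eq)
      moreover have "v \<inter> c' a = v \<inter> c a" for a using False by (auto simp: c'_def)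
      ultimately show ?thesis using c2 v by presburger
    next
      case True
      define v' where "v' = v - {m}"
      have v'm: "v' \<subseteq> {0..<m}" using v by (auto simp: v'_def)
      have "{a\<in>A. odd (card (v \<inter> c' a))} = symd (w v') u"
      proof -
        have eq: "odd (card (v \<inter> c' a)) \<longleftrightarrow> (odd (card (v' \<inter> c a)) \<noteq> (a \<in> u))" for a
        proof -
          have mc: "m \<notin> c a" using c1 by (meson atLeastLessThan_iff less_irrefl subsetD)
          show ?thesis
          proof (cases "a \<in> u")
            case True
            have "v \<inter> c' a = insert m (v' \<inter> c a)" using \<open>m \<in> v\<close> True mc
              by (auto simp: c'_def v'_def)
            moreover have "finite (v' \<inter> c a)" using v'm finite_subset by blast
            moreover have "m \<notin> v' \<inter> c a" using mc by auto
            ultimately show ?thesis using True by simp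
          next
            case False
            have "v \<inter> c' a = v' \<inter> c a" using \<open>m \<in> v\<close> False mc
              by (auto simp: c'_def v'_def)
            thus ?thesis using False by simp
          qed
        qed
        show ?thesis
        proof (rule set_eqI)
          fix a
          show "a \<in> {a\<in>A. odd (card (v \<inter> c' a))} \<longleftrightarrow> a \<in> symd (w v') u"
            unfolding w_def symd_def mem_Collect_eq Un_iff Diff_iff eq using uA by blast
        qed
      qed
      thus ?thesis using ugood[OF v'm] by simp
    qed
  qed
qed



lemma numfact: "(2::nat)^(256*q) * 15^q * 16^(1024*q) \<le> 2^(1024*q) * 15^(1024*q)"
proof -
  have "(2::nat)^(3328*q) \<le> 2^(3577*q)" by (rule power_increasing) simp_all
  also have "\<dots> = (2^7)^(511*q)" unfolding power_mult[symmetric] by simp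
  also have "\<dots> \<le> (15^2)^(511*q)" by (rule power_mono) simp_all
  also have "\<dots> = 15^(1022*q)" unfolding power_mult[symmetric] by simp
  also have "\<dots> \<le> 15^(1023*q)" by (rule power_increasing) simp_all
  finally have a: "(2::nat)^(3328*q) \<le> 15^(1023*q)" .
  have s16: "(16::nat)^(1024*q) = 2^(4096*q)"
  proof -
    have "(16::nat)^(1024*q) = (2^4)^(1024*q)" by simp
    also have "\<dots> = 2^(4096*q)" unfolding power_mult[symmetric] by simp
    finally show ?thesis .
  qed
  have "(2::nat)^(256*q) * 15^q * 16^(1024*q) = 15^q * (2^(256*q) * 2^(4096*q))"
    unfolding s16 by simp
  also have "\<dots> = 15^q * (2^(1024*q) * 2^(3328*q))"
    unfolding power_add[symmetric] by simp
  also have "\<dots> \<le> 15^q * (2^(1024*q) * 15^(1023*q))" using a by simp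
  also have "\<dots> = 2^(1024*q) * 15^(1024*q)"
    by (simp add: power_add[symmetric])
  finally show ?thesis .
qed

definition mm :: "nat \<Rightarrow> nat" where "mm d = (if d \<le> 10 then 2^d else 2^(d-2))"
definition kk :: "nat \<Rightarrow> nat" where "kk d = (if d \<le> 10 then 1 else 2^(d-10))"
definition codeprop :: "nat \<Rightarrow> (nat set \<Rightarrow> nat set) \<Rightarrow> bool" where
  "codeprop d c \<longleftrightarrow> (\<forall>a. c a \<subseteq> {0..<mm d}) \<and>
     (\<forall>v. v \<subseteq> {0..<mm d} \<and> v \<noteq> {} \<longrightarrow> kk d \<le> card {a\<in>Pow {0..<d}. odd (card (v \<inter> c a))})"

lemma binom_bound:
  fixes A :: "'a set" and b :: nat
  assumes "finite A" "card A = M" "k \<le> M" "0 < b"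
  shows "b^M * card {z. z \<subseteq> A \<and> card z < k} \<le> b^k * (b+1)^M"
proof -
  have eq: "{z. z \<subseteq> A \<and> card z < k} = (\<Union>j\<in>{..<k}. {z. z \<subseteq> A \<and> card z = j})" by auto
  have "card {z. z \<subseteq> A \<and> card z < k} \<le> (\<Sum>j<k. card {z. z \<subseteq> A \<and> card z = j})"
    unfolding eq by (rule card_UN_le) auto
  also have "\<dots> = (\<Sum>j<k. M choose j)" using n_subsets[OF assms(1)] assms(2) by simp
  finally have c1: "card {z. z \<subseteq> A \<and> card z < k} \<le> (\<Sum>j<k. M choose j)" .
  have "b^M * card {z. z \<subseteq> A \<and> card z < k} \<le> b^M * (\<Sum>j<k. M choose j)"
    using c1 by simp
  also have "\<dots> = (\<Sum>j<k. (M choose j) * b^M)" unfolding sum_distrib_right[symmetric] by (rule mult.commute)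
  also have "\<dots> \<le> (\<Sum>j<k. (M choose j) * b^(M-j) * b^k)"
  proof (rule sum_mono)
    fix j assume "j \<in> {..<k}"
    hence "j \<le> M" "j \<le> k" using assms(3) by auto
    hence "b^M = b^(M-j) * b^j" by (simp add: power_add[symmetric])
    also have "\<dots> \<le> b^(M-j) * b^k"
      using \<open>j \<le> k\<close> assms(4) by (simp add: power_increasing)
    finally show "(M choose j) * b^M \<le> (M choose j) * b^(M-j) * b^k" by (simp add: mult.assoc)
  qed
  also have "\<dots> \<le> (\<Sum>j\<le>M. (M choose j) * b^(M-j) * b^k)"
    using assms(3) by (intro sum_mono2) auto
  also have "\<dots> = b^k * (\<Sum>j\<le>M. (M choose j) * 1^j * b^(M-j))"
    by (simp add: sum_distrib_left mult.commute mult.left_commute)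
  also have "\<dots> = b^k * (b+1)^M" using binomial_ring[of "1::nat" b M] by (simp add: add.commute)
  finally show ?thesis .
qed

lemma code_exists: "\<exists>c. codeprop d c"
proof (cases "d \<le> 10")
  case True
  have B: "{z. z \<subseteq> Pow {0..<d} \<and> card z < 1} = {{}}"
  proof -
    have "z = {}" if "z \<subseteq> Pow {0..<d}" "card z < 1" for z :: "nat set set"
    proof -
      have "finite z" using that(1) finite_subset by blast
      thus ?thesis using that(2) by simp
    qed
    thus ?thesis by auto
  qed
  hence B': "{z. z \<subseteq> Pow {0..<d} \<and> card z = 0} = {{}}" by simp
  have "\<exists>c. (\<forall>a. c a \<subseteq> {0..<(2::nat)^d}) \<and>
     (\<forall>v. v \<subseteq> {0..<(2::nat)^d} \<and> v \<noteq> {} \<longrightarrow> 1 \<le> card {a\<in>Pow {0..<d}. odd (card (v \<inter> c a))})"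
    by (rule greedy_code) (auto simp: B B' card_Pow)
  thus ?thesis using True unfolding codeprop_def mm_def kk_def by simp
next
  case False
  define q where "q = (2::nat)^(d-10)"
  have M: "(2::nat)^d = 1024 * q"
  proof -
    have "d = 10 + (d-10)" using False by simp
    hence "(2::nat)^d = 2^10 * 2^(d-10)" by (metis power_add)
    thus ?thesis unfolding q_def by simp
  qed
  have m: "(2::nat)^(d-2) = 256 * q"
  proof -
    have "d - 2 = 8 + (d-10)" using False by simp
    hence "(2::nat)^(d-2) = 2^8 * 2^(d-10)" by (metis power_add)
    thus ?thesis unfolding q_def by simp
  qed
  define B where "B = card {z. z \<subseteq> Pow {0..<d} \<and> card z < q}"
  have bb: "15^(1024*q) * B \<le> 15^q * (15+1)^(1024*q)"
    unfolding B_def using M by (intro binom_bound) (auto simp: card_Pow)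
  have "2^(256*q) * B * 15^(1024*q) \<le> 2^(256*q) * (15^q * 16^(1024*q))"
    using bb by (simp add: mult.commute mult.left_commute)
  also have "\<dots> \<le> 2^(1024*q) * 15^(1024*q)" using numfact[of q] by (simp add: mult.assoc)
  finally have "2^(256*q) * B \<le> 2^(1024*q)" by simp
  hence "\<exists>c. (\<forall>a. c a \<subseteq> {0..<256*q}) \<and>
     (\<forall>v. v \<subseteq> {0..<256*q} \<and> v \<noteq> {} \<longrightarrow> q \<le> card {a\<in>Pow {0..<d}. odd (card (v \<inter> c a))})"
    unfolding B_def
    by (intro greedy_code) (auto simp: card_Pow M q_def)
  thus ?thesis using False M m unfolding codeprop_def mm_def kk_def q_def by simp
qed



fun DD :: "nat \<Rightarrow> nat" where
  "DD 0 = 0"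
| "DD (Suc i) = DD i + mm (DD i)"

definition Tl :: "(nat \<Rightarrow> nat set \<Rightarrow> nat set) \<Rightarrow> nat \<Rightarrow> nat set \<Rightarrow> nat set" where
  "Tl Cf l a = (\<lambda>j. DD l + j) ` Cf (DD l) a"

definition lev :: "(nat \<Rightarrow> nat set \<Rightarrow> nat set) \<Rightarrow> nat \<Rightarrow> nat set \<Rightarrow> real" where
  "lev Cf l x = (if odd (card (x \<inter> Tl Cf l (x \<inter> {0..<DD l}))) then 1 else 0)"

definition ff :: "(nat \<Rightarrow> nat set \<Rightarrow> nat set) \<Rightarrow> nat \<Rightarrow> nat set \<Rightarrow> real" where
  "ff Cf s x = (\<Sum>l<s. (1/4)^(Suc l) * lev Cf l x)"

definition chi :: "nat set \<Rightarrow> nat set \<Rightarrow> real" where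
  "chi T x = (if odd (card (x \<inter> T)) then -1 else 1)"

lemma DD_mono: "l \<le> l' \<Longrightarrow> DD l \<le> DD l'"
  by (rule lift_Suc_mono_le[of DD]) auto

lemma Tl_sub:
  assumes "\<forall>d. codeprop d (Cf d)"
  shows "Tl Cf l a \<subseteq> {DD l..<DD (Suc l)}"
proof -
  have "Cf (DD l) a \<subseteq> {0..<mm (DD l)}" using assms unfolding codeprop_def by blast
  thus ?thesis unfolding Tl_def by auto
qed

lemma Tl_fin:
  assumes "\<forall>d. codeprop d (Cf d)"
  shows "finite (Tl Cf l a)"
  using Tl_sub[OF assms] finite_subset by blast

lemma lev_local:
  assumes C: "\<forall>d. codeprop d (Cf d)"
  and eq: "x \<inter> {0..<DD (Suc l)} = y \<inter> {0..<DD (Suc l)}"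
  shows "lev Cf l x = lev Cf l y"
proof -
  have le: "DD l \<le> DD (Suc l)" by simp
  have a: "x \<inter> {0..<DD l} = y \<inter> {0..<DD l}"
  proof -
    have "x \<inter> {0..<DD l} = (x \<inter> {0..<DD (Suc l)}) \<inter> {0..<DD l}" using le by auto
    also have "\<dots> = (y \<inter> {0..<DD (Suc l)}) \<inter> {0..<DD l}" using eq by simp
    also have "\<dots> = y \<inter> {0..<DD l}" using le by auto
    finally show ?thesis .
  qed
  define T where "T = Tl Cf l (x \<inter> {0..<DD l})"
  have TS0: "T \<subseteq> {DD l..<DD (Suc l)}" unfolding T_def by (rule Tl_sub[OF C])
  have TS: "T \<subseteq> {0..<DD (Suc l)}" using TS0 by auto
  have "x \<inter> T = (x \<inter> {0..<DD (Suc l)}) \<inter> T" using TS by auto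
  also have "\<dots> = (y \<inter> {0..<DD (Suc l)}) \<inter> T" using eq by simp
  also have "\<dots> = y \<inter> T" using TS by auto
  finally have "x \<inter> T = y \<inter> T" .
  thus ?thesis unfolding lev_def using a T_def by simp
qed

lemma chi_gadd:
  assumes "finite T"
  shows "chi T (gadd x y) = chi T x * chi T y"
proof -
  have "finite (x \<inter> T)" "finite (y \<inter> T)" using assms by auto
  hence "odd (card (gadd x y \<inter> T)) \<longleftrightarrow> (odd (card (x \<inter> T)) \<noteq> odd (card (y \<inter> T)))"
    unfolding gadd_inter by (rule odd_gadd)
  thus ?thesis unfolding chi_def by auto
qed

lemma chi_sq: "chi T x * chi T x = 1"
  unfolding chi_def by auto

lemma chi_abs: "\<bar>chi T x\<bar> = 1"
  unfolding chi_def by auto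

lemma subgroup_finite: "is_subgroup n H \<Longrightarrow> finite H"
  unfolding is_subgroup_def cube_def by (meson finite_Pow_iff finite_atLeastLessThan finite_subset)

lemma chi_sum_zero:
  assumes H: "is_subgroup n H" and h0: "h0 \<in> H" and c: "chi T h0 = -1" and fT: "finite T"
  shows "(\<Sum>x\<in>H. chi T x) = 0"
proof -
  have cl: "gadd x h0 \<in> H" if "x \<in> H" for x
    using H that h0 unfolding is_subgroup_def by blast
  have "(\<Sum>x\<in>H. chi T x) = (\<Sum>x\<in>H. chi T (gadd x h0))"
    by (rule sum.reindex_bij_witness[of _ "\<lambda>x. gadd x h0" "\<lambda>x. gadd x h0"])
       (auto simp: gadd_gadd cl)
  also have "\<dots> = (\<Sum>x\<in>H. - chi T x)"
    using chi_gadd[OF fT] c by simp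
  also have "\<dots> = - (\<Sum>x\<in>H. chi T x)" by (simp add: sum_negf)
  finally show ?thesis by simp
qed

lemma tail_sum_eq:
  "Suc i \<le> s \<Longrightarrow> (\<Sum>l\<in>{Suc i..<s}. (1/4::real)^(Suc l)) = ((1/4)^(Suc i) - (1/4)^s) / 3"
proof (induction s rule: dec_induct)
  case base thus ?case by simp
next
  case (step s)
  have "{Suc i..<Suc s} = insert s {Suc i..<s}" using step.hyps by auto
  hence "(\<Sum>l\<in>{Suc i..<Suc s}. (1/4::real)^(Suc l)) = (1/4)^(Suc s) + (\<Sum>l\<in>{Suc i..<s}. (1/4::real)^(Suc l))"
    by simp
  also have "\<dots> = (1/4)^(Suc s) + ((1/4)^(Suc i) - (1/4)^s) / 3" using step.IH by simp
  also have "\<dots> = ((1/4)^(Suc i) - (1/4)^(Suc s)) / 3"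
  proof -
    have p: "\<And>p a::real. p/4 + (a - p)/3 = (a - p/4)/3" by (simp add: field_simps)
    have "(1/4::real)^(Suc s) = (1/4)^s/4" by simp
    thus ?thesis using p[of "(1/4)^s" "(1/4)^(Suc i)"] by simp
  qed
  finally show ?case .
qed

lemma tail_sum: "(\<Sum>l\<in>{Suc i..<s}. (1/4::real)^(Suc l)) \<le> (1/4)^(Suc i) / 3"
proof (cases "Suc i \<le> s")
  case True
  have "((1/4::real)^(Suc i) - (1/4)^s)/3 \<le> (1/4)^(Suc i)/3" by (intro divide_right_mono) auto
  thus ?thesis unfolding tail_sum_eq[OF True] .
next
  case False thus ?thesis by simp
qed

lemma gadd_low:
  assumes "x \<inter> {0..<D} = {}" "D' \<le> D"
  shows "gadd x g \<inter> {0..<D'} = g \<inter> {0..<D'}"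
  using assms by (auto simp: gadd_def)

lemma irregular:
  assumes C: "\<forall>d. codeprop d (Cf d)" and H: "is_subgroup n H"
  and Hz: "\<forall>h\<in>H. h \<inter> {0..<DD i} = {}" and "i < s" and h0: "h0 \<in> H"
  and odd: "odd (card (h0 \<inter> Tl Cf i (g \<inter> {0..<DD i})))"
  and eps: "\<epsilon> < (1/4)^(Suc i) / 6"
  shows "\<not> regular_value H (ff Cf s) \<epsilon> g"
proof
  assume reg: "regular_value H (ff Cf s) \<epsilon> g"
  define T where "T = Tl Cf i (g \<inter> {0..<DD i})"
  have finT: "finite T" unfolding T_def by (rule Tl_fin[OF C])
  have finH: "finite H" using subgroup_finite[OF H] .
  have cH: "0 < card H" using H finH unfolding is_subgroup_def by (auto simp: card_gt_0_iff)
  have c0: "chi T h0 = -1" using odd unfolding chi_def T_def by simp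
  define \<chi> where "\<chi> x = complex_of_real (chi T x)" for x
  have nt: "nontrivial_character H \<chi>"
    unfolding nontrivial_character_def is_character_def \<chi>_def
  proof (intro conjI ballI)
    fix x show "complex_of_real (chi T x) \<noteq> 0" unfolding chi_def by simp
  next
    fix x y show "complex_of_real (chi T (gadd x y)) = complex_of_real (chi T x) * complex_of_real (chi T y)"
      using chi_gadd[OF finT] by simp
  next
    show "\<exists>x\<in>H. complex_of_real (chi T x) \<noteq> 1" using h0 c0 by (intro bexI[of _ h0]) auto
  qed
  have bound: "cmod (\<Sum>x\<in>H. complex_of_real (ff Cf s (gadd x g)) * \<chi> x) \<le> \<epsilon> * real (card H)"
    using reg nt unfolding regular_value_def by blast
  define S where "S = (\<Sum>x\<in>H. ff Cf s (gadd x g) * chi T x)"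
  have "(\<Sum>x\<in>H. complex_of_real (ff Cf s (gadd x g)) * \<chi> x) = complex_of_real S"
    unfolding S_def \<chi>_def by simp
  hence Sb: "\<bar>S\<bar> \<le> \<epsilon> * real (card H)" using bound by simp
  define Sl where "Sl l = (\<Sum>x\<in>H. lev Cf l (gadd x g) * chi T x)" for l
  define c where "c l = (1/4::real)^(Suc l)" for l
  have Sdec: "S = (\<Sum>l<s. c l * Sl l)"
    unfolding S_def Sl_def ff_def c_def
    by (simp add: sum_distrib_left sum_distrib_right mult.assoc sum.swap[of _ H])
  have Slow: "Sl l = 0" if "l < i" for l
  proof -
    have "DD (Suc l) \<le> DD i" using that by (intro DD_mono) simp
    hence "lev Cf l (gadd x g) = lev Cf l g" if "x \<in> H" for x
      using lev_local[OF C gadd_low] Hz that by blast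
    hence "Sl l = (\<Sum>x\<in>H. lev Cf l g * chi T x)" unfolding Sl_def by simp
    also have "\<dots> = lev Cf l g * (\<Sum>x\<in>H. chi T x)" by (simp add: sum_distrib_left)
    also have "\<dots> = 0" using chi_sum_zero[OF H h0 c0 finT] by simp
    finally show ?thesis .
  qed
  have Sli: "Sl i = - chi T g * real (card H) / 2"
  proof -
    have "lev Cf i (gadd x g) * chi T x = chi T x / 2 - chi T g / 2" if "x \<in> H" for x
    proof -
      have a: "gadd x g \<inter> {0..<DD i} = g \<inter> {0..<DD i}"
        using gadd_low[of x "DD i" "DD i" g] Hz that by simp
      have "lev Cf i (gadd x g) = (1 - chi T (gadd x g)) / 2"
        unfolding lev_def a T_def[symmetric] chi_def by simp
      also have "\<dots> = (1 - chi T x * chi T g) / 2" using chi_gadd[OF finT] by simp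
      finally have L: "lev Cf i (gadd x g) = (1 - chi T x * chi T g) / 2" .
      have "lev Cf i (gadd x g) * chi T x = (chi T x - chi T g * (chi T x * chi T x)) / 2"
        unfolding L by (simp add: field_simps)
      thus ?thesis using chi_sq[of T x] by simp
    qed
    hence "Sl i = (\<Sum>x\<in>H. chi T x / 2 - chi T g / 2)" unfolding Sl_def by simp
    also have "\<dots> = (\<Sum>x\<in>H. chi T x) / 2 - real (card H) * (chi T g / 2)"
      by (simp add: sum_subtractf sum_divide_distrib)
    also have "\<dots> = - chi T g * real (card H) / 2" using chi_sum_zero[OF H h0 c0 finT] by simp
    finally show ?thesis .
  qed
  have Slb: "\<bar>Sl l\<bar> \<le> real (card H)" for l
  proof -
    have "\<bar>Sl l\<bar> \<le> (\<Sum>x\<in>H. \<bar>lev Cf l (gadd x g) * chi T x\<bar>)" unfolding Sl_def by (rule sum_abs)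
    also have "\<dots> \<le> (\<Sum>x\<in>H. 1)"
      by (rule sum_mono) (simp add: abs_mult chi_abs lev_def)
    finally show ?thesis by simp
  qed
  have split: "{..<s} = {..<i} \<union> ({i} \<union> {Suc i..<s})" using \<open>i < s\<close> by auto
  have "(\<Sum>l<s. c l * Sl l) = (\<Sum>l<i. c l * Sl l) + (c i * Sl i + (\<Sum>l\<in>{Suc i..<s}. c l * Sl l))"
    unfolding split by (subst sum.union_disjoint; auto)+
  hence Se: "S = c i * Sl i + (\<Sum>l\<in>{Suc i..<s}. c l * Sl l)" using Slow Sdec by simp
  have Rb: "\<bar>\<Sum>l\<in>{Suc i..<s}. c l * Sl l\<bar> \<le> c i / 3 * real (card H)"
  proof -
    have "\<bar>\<Sum>l\<in>{Suc i..<s}. c l * Sl l\<bar> \<le> (\<Sum>l\<in>{Suc i..<s}. \<bar>c l * Sl l\<bar>)" by (rule sum_abs)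
    also have "\<dots> \<le> (\<Sum>l\<in>{Suc i..<s}. c l * real (card H))"
      by (rule sum_mono) (simp add: abs_mult c_def Slb mult_left_mono)
    also have "\<dots> = (\<Sum>l\<in>{Suc i..<s}. c l) * real (card H)" by (simp add: sum_distrib_right)
    also have "\<dots> \<le> c i / 3 * real (card H)"
      using tail_sum[of i s] unfolding c_def by (intro mult_right_mono) auto
    finally show ?thesis .
  qed
  have Sib: "\<bar>c i * Sl i\<bar> = c i * real (card H) / 2"
    unfolding Sli by (simp add: abs_mult chi_abs c_def)
  have "c i * real (card H) / 2 - c i / 3 * real (card H) \<le> \<bar>S\<bar>"
    using Se Rb Sib by linarith
  hence "c i * real (card H) / 6 \<le> \<bar>S\<bar>" by simp
  moreover have "\<epsilon> * real (card H) < c i / 6 * real (card H)"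
    using eps cH unfolding c_def by simp
  ultimately show False using Sb by simp
qed



lemma count_lower:
  assumes "D \<le> n" "Good \<subseteq> Pow {0..<D}"
  shows "card Good * 2^(n-D) \<le> card {g \<in> cube n. g \<inter> {0..<D} \<in> Good}"
proof -
  have finG: "finite Good" using assms(2) finite_subset by blast
  let ?h = "\<lambda>(a, b). a \<union> (b::nat set)"
  have inj: "inj_on ?h (Good \<times> Pow {D..<n})"
  proof (rule inj_onI, clarify)
    fix a b a' b' assume "a \<in> Good" "b \<subseteq> {D..<n}" "a' \<in> Good" "b' \<subseteq> {D..<n}"
      and eq: "a \<union> b = a' \<union> b'"
    hence s: "a \<subseteq> {0..<D}" "a' \<subseteq> {0..<D}" using assms(2) by auto
    have "a = (a \<union> b) \<inter> {0..<D}" using s(1) \<open>b \<subseteq> {D..<n}\<close> by auto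
    also have "\<dots> = (a' \<union> b') \<inter> {0..<D}" using eq by simp
    also have "\<dots> = a'" using s(2) \<open>b' \<subseteq> {D..<n}\<close> by auto
    finally have "a = a'" .
    moreover have "b = (a \<union> b) \<inter> {D..<n}" using s(1) \<open>b \<subseteq> {D..<n}\<close> by auto
    moreover have "(a' \<union> b') \<inter> {D..<n} = b'" using s(2) \<open>b' \<subseteq> {D..<n}\<close> by auto
    ultimately show "a = a' \<and> b = b'" using eq by simp
  qed
  have sub: "?h ` (Good \<times> Pow {D..<n}) \<subseteq> {g \<in> cube n. g \<inter> {0..<D} \<in> Good}"
  proof clarify
    fix a b assume a: "a \<in> Good" and b: "b \<subseteq> {D..<n}"
    have s: "a \<subseteq> {0..<D}" using a assms(2) by auto
    have "(a \<union> b) \<inter> {0..<D} = a" using s b by auto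
    moreover have "a \<union> b \<in> cube n" unfolding cube_def using s b assms(1) by auto
    ultimately show "a \<union> b \<in> cube n \<and> (a \<union> b) \<inter> {0..<D} \<in> Good" using a by simp
  qed
  have "card Good * 2^(n-D) = card (Good \<times> Pow {D..<n})"
    by (simp add: card_cartesian_product card_Pow)
  also have "\<dots> = card (?h ` (Good \<times> Pow {D..<n}))" using card_image[OF inj] by simp
  also have "\<dots> \<le> card {g \<in> cube n. g \<inter> {0..<D} \<in> Good}"
    by (rule card_mono[OF _ sub]) (simp add: cube_def)
  finally show ?thesis .
qed

lemma mm_ge: "2^(d-2) \<le> mm d"
  unfolding mm_def by (auto intro: power_increasing)

lemma kk_ge: "2^d \<le> 1024 * kk d"
proof (cases "d \<le> 10")
  case True
  have "(2::nat)^d \<le> 2^10" using True by (intro power_increasing) auto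
  thus ?thesis using True unfolding kk_def by simp
next
  case False
  have "d = 10 + (d-10)" using False by simp
  hence "(2::nat)^d = 2^10 * 2^(d-10)" by (metis power_add)
  thus ?thesis using False unfolding kk_def by simp
qed

lemma DD3: "DD 3 = 11"
  by (simp add: numeral_3_eq_3 mm_def)

lemma tower_DD: "2 \<le> i \<Longrightarrow> tower i + 2 \<le> DD (Suc i)"
proof (induction i rule: dec_induct)
  case base
  show ?case using DD3 by (simp add: numeral_2_eq_2 numeral_3_eq_3)
next
  case (step i)
  have "tower (Suc i) = 2 ^ tower i" by simp
  also have "\<dots> \<le> 2 ^ (DD (Suc i) - 2)" using step.IH by (intro power_increasing) auto
  also have "\<dots> \<le> mm (DD (Suc i))" by (rule mm_ge)
  finally show ?case using step.IH by simp
qed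

lemma geom_sum: "(\<Sum>l<s. (1/4::real)^(Suc l)) = (1 - (1/4)^s) / 3"
proof (induction s)
  case 0 thus ?case by simp
next
  case (Suc s)
  have p: "\<And>p::real. (1 - p)/3 + p/4 = (1 - p/4)/3" by (simp add: field_simps)
  have "(\<Sum>l<Suc s. (1/4::real)^(Suc l)) = (1 - (1/4)^s) / 3 + (1/4)^s/4" using Suc by simp
  also have "\<dots> = (1 - (1/4::real)^(Suc s)) / 3" using p[of "(1/4)^s"] by simp
  finally show ?case .
qed

lemma ff_range: "0 \<le> ff Cf s x \<and> ff Cf s x \<le> 1"
proof
  show "0 \<le> ff Cf s x" unfolding ff_def lev_def by (intro sum_nonneg) auto
  have "ff Cf s x \<le> (\<Sum>l<s. (1/4::real)^(Suc l))"
    unfolding ff_def lev_def by (intro sum_mono) auto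
  also have "\<dots> \<le> 1" unfolding geom_sum
  proof -
    have p: "\<And>p::real. 0 \<le> p \<Longrightarrow> (1 - p)/3 \<le> 1" by simp
    show "(1 - (1/4::real)^s) / 3 \<le> 1" by (rule p) simp
  qed
  finally show "ff Cf s x \<le> 1" .
qed



theorem mainTheorem15:
  fixes \<epsilon> :: real
  assumes "0 < \<epsilon>" and "\<epsilon> < 1/20"
  shows "\<exists>n0. \<forall>n\<ge>n0. \<exists>f :: nat set \<Rightarrow> real.
           (\<forall>x\<in>cube n. 0 \<le> f x \<and> f x \<le> 1) \<and>
           (\<forall>H. is_subgroup n H \<and> regular_subgroup n H f \<epsilon> \<longrightarrow>
              real (W (log 2 (1/\<epsilon>) / 2 - 5)) \<le> real (card (cube n)) / real (card H))"
proof -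
  define t where "t = log 2 (1/\<epsilon>) / 2 - 5"
  define K where "K = nat \<lceil>t\<rceil>"
  have Wt: "W (log 2 (1/\<epsilon>) / 2 - 5) = tower K" unfolding W_def K_def t_def by simp
  have cardcube: "card (cube n) = 2^n" for n unfolding cube_def by (simp add: card_Pow)
  have Hpos: "0 < card H" "finite H" if "is_subgroup n H" for n H
  proof -
    show fH: "finite H" using subgroup_finite[OF that] .
    show "0 < card H" using that fH unfolding is_subgroup_def by (auto simp: card_gt_0_iff)
  qed
  show ?thesis
  proof (cases "K = 0")
    case True
    show ?thesis
    proof (intro exI[of _ 0] allI impI)
      fix n :: nat
      show "\<exists>f :: nat set \<Rightarrow> real. (\<forall>x\<in>cube n. 0 \<le> f x \<and> f x \<le> 1) \<and>
           (\<forall>H. is_subgroup n H \<and> regular_subgroup n H f \<epsilon> \<longrightarrow>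
              real (W (log 2 (1/\<epsilon>) / 2 - 5)) \<le> real (card (cube n)) / real (card H))"
      proof (intro exI[of _ "\<lambda>_. 0"] conjI allI impI ballI)
        fix H assume H: "is_subgroup n H \<and> regular_subgroup n H (\<lambda>_. 0) \<epsilon>"
        have "card H \<le> card (cube n)"
          using H unfolding is_subgroup_def by (intro card_mono) (auto simp: cube_def)
        hence "1 \<le> real (card (cube n)) / real (card H)"
          using Hpos[of n H] H by simp
        thus "real (W (log 2 (1/\<epsilon>) / 2 - 5)) \<le> real (card (cube n)) / real (card H)"
          using Wt True by simp
      qed simp_all
    qed
  next
    case False
    have ceilK: "real_of_int \<lceil>t\<rceil> = real K" using False unfolding K_def by simp
    have "real K - 1 < t" using ceiling_correct[of t] ceilK by linarith
    hence lg: "real (2*K+8) < log 2 (1/\<epsilon>)" unfolding t_def by simp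
    have "2 powr real (2*K+8) < 1/\<epsilon>"
      using lg assms(1) by (subst less_log_iff[symmetric]) auto
    moreover have pr: "(2::real) powr real (2*K+8) = 2^(2*K+8)" by (rule powr_realpow) simp
    ultimately have "2^(2*K+8) < 1/\<epsilon>" by linarith
    hence "\<epsilon> < 1 / 2^(2*K+8)" using assms(1) by (simp add: field_simps)
    moreover have "(1::real) / 2^(2*K+8) = (1/4)^(K+4)"
    proof -
      have "(2::real)^(2*K+8) = (2^2)^(K+4)" unfolding power_mult[symmetric] by simp
      thus ?thesis by (simp add: power_one_over)
    qed
    ultimately have e4: "\<epsilon> < (1/4)^(K+4)" by simp
    have q16: "(1/4::real)^(K+2) = 16 * (1/4)^(K+4)"
    proof -
      have a: "(1/4::real)^((K+2)+2) = (1/4)^(K+2) * (1/4)^2" by (rule power_add)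
      have b: "(K+2)+2 = K+4" by simp
      define X where "X = (1/4::real)^(K+2)"
      have "(1/4::real)^(K+4) = X * (1/4)^2" using a unfolding b X_def .
      thus ?thesis unfolding X_def[symmetric] by (simp add: power2_eq_square)
    qed
    have e1024: "\<epsilon> * 1024 < 1"
    proof -
      have A: "(1/4::real)^(K+4) \<le> (1/4)^5" using False by (intro power_decreasing) auto
      have B: "(1/4::real)^5 = 1/1024" by (simp add: power_one_over)
      show ?thesis using A B e4 by linarith
    qed
    obtain Cf where C: "\<forall>d. codeprop d (Cf d)" using code_exists by metis
    define s where "s = K + 2"
    show ?thesis
    proof (intro exI[of _ "DD s"] allI impI)
      fix n assume ns: "DD s \<le> n"
      show "\<exists>f :: nat set \<Rightarrow> real. (\<forall>x\<in>cube n. 0 \<le> f x \<and> f x \<le> 1) \<and>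
           (\<forall>H. is_subgroup n H \<and> regular_subgroup n H f \<epsilon> \<longrightarrow>
              real (W (log 2 (1/\<epsilon>) / 2 - 5)) \<le> real (card (cube n)) / real (card H))"
      proof (intro exI[of _ "ff Cf s"] conjI allI impI ballI)
        fix x show "0 \<le> ff Cf s x" "ff Cf s x \<le> 1" using ff_range by auto
      next
        fix H assume HH: "is_subgroup n H \<and> regular_subgroup n H (ff Cf s) \<epsilon>"
        hence H: "is_subgroup n H" and R: "regular_subgroup n H (ff Cf s) \<epsilon>" by auto
        have Z: "\<forall>h\<in>H. h \<inter> {0..<DD i} = {}" if "i \<le> s" for i
          using that
        proof (induction i)
          case 0 thus ?case by simp
        next
          case (Suc i)
          have IH: "\<forall>h\<in>H. h \<inter> {0..<DD i} = {}" using Suc by simp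
          have iS: "i < s" using Suc.prems by simp
          show ?case
          proof (rule ccontr)
            assume "\<not> (\<forall>h\<in>H. h \<inter> {0..<DD (Suc i)} = {})"
            then obtain h0 p where h0: "h0 \<in> H" and p: "p \<in> h0" "p < DD (Suc i)" by auto
            have pge: "DD i \<le> p"
            proof (rule ccontr)
              assume "\<not> DD i \<le> p"
              hence "p \<in> h0 \<inter> {0..<DD i}" using p by auto
              thus False using IH h0 by blast
            qed
            define v where "v = {j. j < mm (DD i) \<and> DD i + j \<in> h0}"
            have vsub: "v \<subseteq> {0..<mm (DD i)}" unfolding v_def by auto
            have "p - DD i \<in> v" unfolding v_def using p pge by auto
            hence vne: "v \<noteq> {}" by auto
            define Good where "Good = {a\<in>Pow {0..<DD i}. odd (card (v \<inter> Cf (DD i) a))}"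
            have kG: "kk (DD i) \<le> card Good"
              using C vsub vne unfolding codeprop_def Good_def by blast
            have DDn: "DD i \<le> n" using ns iS DD_mono[of i s] by simp
            have eps: "\<epsilon> < (1/4)^(Suc i) / 6"
            proof -
              have A: "(1/4::real)^(K+2) \<le> (1/4)^(Suc i)"
                using iS unfolding s_def by (intro power_decreasing) auto
              show ?thesis using A q16 e4 assms(1) by linarith
            qed
            have bad: "{g \<in> cube n. g \<inter> {0..<DD i} \<in> Good} \<subseteq>
                       {g \<in> cube n. \<not> regular_value H (ff Cf s) \<epsilon> g}"
            proof
              fix g assume gm: "g \<in> {g \<in> cube n. g \<inter> {0..<DD i} \<in> Good}"
              hence g: "g \<in> cube n" "g \<inter> {0..<DD i} \<in> Good" by auto
              define a where "a = g \<inter> {0..<DD i}"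
              have ca: "Cf (DD i) a \<subseteq> {0..<mm (DD i)}" using C unfolding codeprop_def by blast
              have "h0 \<inter> Tl Cf i a = (\<lambda>j. DD i + j) ` (v \<inter> Cf (DD i) a)"
                unfolding Tl_def v_def using ca by auto
              hence "card (h0 \<inter> Tl Cf i a) = card (v \<inter> Cf (DD i) a)"
                by (simp add: card_image)
              hence "odd (card (h0 \<inter> Tl Cf i a))" using g(2) unfolding Good_def a_def by simp
              hence "\<not> regular_value H (ff Cf s) \<epsilon> g"
                using irregular[OF C H IH iS h0 _ eps] unfolding a_def by blast
              thus "g \<in> {g \<in> cube n. \<not> regular_value H (ff Cf s) \<epsilon> g}" using g by simp
            qed
            have "card Good * 2^(n - DD i) \<le> card {g \<in> cube n. g \<inter> {0..<DD i} \<in> Good}"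
              by (rule count_lower[OF DDn]) (auto simp: Good_def)
            also have "\<dots> \<le> card {g \<in> cube n. \<not> regular_value H (ff Cf s) \<epsilon> g}"
              by (rule card_mono[OF _ bad]) (simp add: cube_def)
            finally have c1: "card Good * 2^(n - DD i) \<le> card {g \<in> cube n. \<not> regular_value H (ff Cf s) \<epsilon> g}" .
            have "(2::nat)^n = 2^(DD i) * 2^(n - DD i)" using DDn by (simp add: power_add[symmetric])
            also have "\<dots> \<le> 1024 * kk (DD i) * 2^(n - DD i)" using kk_ge by simp
            also have "\<dots> \<le> 1024 * (card Good * 2^(n - DD i))" using kG by simp
            also have "\<dots> \<le> 1024 * card {g \<in> cube n. \<not> regular_value H (ff Cf s) \<epsilon> g}" using c1 by simp
            finally have "real (2^n) \<le> 1024 * real (card {g \<in> cube n. \<not> regular_value H (ff Cf s) \<epsilon> g})"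
              by (simp only: of_nat_le_iff[symmetric] of_nat_mult)
            also have "\<dots> \<le> 1024 * (\<epsilon> * 2^n)" using R unfolding regular_subgroup_def by simp
            also have "\<dots> < 2^n" using e1024 by simp
            finally show False by simp
          qed
        qed
        have Zs: "\<forall>h\<in>H. h \<inter> {0..<DD s} = {}" using Z by simp
        have Hc: "H \<subseteq> cube n" using H unfolding is_subgroup_def by blast
        have "H \<subseteq> Pow {DD s..<n}"
        proof
          fix h assume h: "h \<in> H"
          hence "h \<subseteq> {0..<n}" using Hc unfolding cube_def by blast
          moreover have "h \<inter> {0..<DD s} = {}" using Zs h by blast
          ultimately have "h \<subseteq> {DD s..<n}"
          proof (intro subsetI)
            fix x assume a1: "h \<subseteq> {0..<n}" and a2: "h \<inter> {0..<DD s} = {}" and x: "x \<in> h"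
            have "x < n" using a1 x by auto
            moreover have "\<not> x < DD s" using a2 x by auto
            ultimately show "x \<in> {DD s..<n}" by simp
          qed
          thus "h \<in> Pow {DD s..<n}" by simp
        qed
        hence cH: "card H \<le> 2^(n - DD s)" using card_mono[of "Pow {DD s..<n}" H] by (simp add: card_Pow)
        have t1: "tower K \<le> tower (Suc K)" by (simp add: less_imp_le)
        have t2: "tower (Suc K) + 2 \<le> DD (Suc (Suc K))" using tower_DD[of "Suc K"] False by simp
        have t3: "DD s \<le> 2 ^ DD s" by (simp add: less_imp_le)
        have sK: "s = Suc (Suc K)" unfolding s_def by simp
        have t2': "tower (Suc K) + 2 \<le> DD s" using t2 unfolding sK .
        have tK: "tower K \<le> 2 ^ DD s" using t1 t2' t3 by linarith
        have "real (2 ^ DD s) * real (card H) \<le> real (2 ^ DD s) * real (2^(n - DD s))"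
          using cH by simp
        also have "\<dots> = real (2^n)" using ns by (simp add: power_add[symmetric])
        finally have "real (2 ^ DD s) \<le> real (2^n) / real (card H)"
          using Hpos[OF H] by (simp add: field_simps)
        hence "real (tower K) \<le> real (2^n) / real (card H)"
          using tK by (meson of_nat_le_iff order_trans)
        thus "real (W (log 2 (1/\<epsilon>) / 2 - 5)) \<le> real (card (cube n)) / real (card H)"
          using Wt cardcube by simp
      qed
    qed
  qed
qed

end
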